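(* Let $a \geq 0$ be a constant. If a function $f:(0,\infty) \to [0,\infty)$ satisfies $$\max\{f(x+y), a\} = \max\{f(x), f(y)\}$$ for all $x,y > 0$, then $f(z) = f(1) \geq a$ for every $z>0$. *)

theory Defs
  imports Complex_Main
begin

end

theory Submission
  imports Defs
begin

theorem lemma2p1:
  fixes f :: "real \<Rightarrow> real" and a :: real
  assumes a_nonneg: "a \<ge> 0"
    and f_nonneg: "\<And>x. x > 0 \<Longrightarrow> f x \<ge> 0"
    and feq: "\<And>x y. x > 0 \<Longrightarrow> y > 0 \<Longrightarrow> max (f (x + y)) a = max (f x) (f y)"
  shows "\<forall>z>0. f z = f 1 \<and> f 1 \<ge> a"
proof -
  have ge: "f x \<ge> a" if "x > 0" for x
    using feq[OF that that] by (metis max.cobounded2 max.idem)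
  have add: "f (x + y) = max (f x) (f y)" if "x > 0" "y > 0" for x y
    proof -
    have "max (f (x + y)) a = f (x + y)" using ge[of "x+y"] that by (simp add: max_def)
    then show ?thesis using feq[OF that] by simp
  qed
  have mono: "f x \<le> f y" if "0 < x" "x < y" for x y
    proof -
    have "f (x + (y - x)) = max (f x) (f (y - x))" using add[of x "y - x"] that by simp
    then have "f y = max (f x) (f (y - x))" by simp
    then show ?thesis by (metis max.cobounded1)
  qed
  have mult: "f (real (Suc n) * x) = f x" if "x > 0" for n x
  proof (induction n)
    case 0 then show ?case by simp
  next
    case (Suc n)
    have e: "real (Suc (Suc n)) * x = real (Suc n) * x + x" by (simp add: algebra_simps)
    have p: "real (Suc n) * x > 0" using that by simp
    have "f (real (Suc n) * x + x) = max (f (real (Suc n) * x)) (f x)" using add[OF p that] .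
    also have "\<dots> = f x" using Suc.IH by simp
    finally show ?case by (simp only: e)
  qed
  have key: "f z = f 1" if z: "z > 0" for z
  proof (cases "z \<le> 1")
    case True
    obtain n :: nat where n: "1 / z < real n" using reals_Archimedean2 by blast
    have "1 < real (Suc n) * z" using n z by (simp add: field_simps)
    hence "f 1 \<le> f (real (Suc n) * z)" using mono[of 1] by (cases "1 = real (Suc n) * z") auto
    hence "f 1 \<le> f z" using mult[OF z] by simp
    moreover have "f z \<le> f 1" using True mono[OF z] by (cases "z = 1") auto
    ultimately show ?thesis by simp
  next
    case False
    obtain n :: nat where n: "z < real n" using reals_Archimedean2 by blast
    have "z < real (Suc n) * 1" using n by simp
    hence "f z \<le> f (real (Suc n) * 1)" using mono[OF z] by blast
    hence "f z \<le> f 1" using mult[of 1] by simp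
    moreover have "f 1 \<le> f z" using False mono[of 1 z] by simp
    ultimately show ?thesis by simp
  qed
  show ?thesis using key ge[of 1] by (meson zero_less_one)
qed

end
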